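(* Let $\Psi:\{0,1\}^n\times\{0,1\}^n\to\{\mathtt{A},\mathtt{T},\mathtt{C},\mathtt{G}\}^n$ be the map sending $(\mathbf{a},\mathbf{b})$ to $\mathbf{c}=(c_1,\dots,c_n)$ with $c_i=\mathtt{A},\mathtt{T},\mathtt{C},\mathtt{G}$ according as $(a_i,b_i)=(0,0),(0,1),(1,0),(1,1)$ respectively. Let $\mathcal{C}_1,\mathcal{C}_2\subseteq\{0,1\}^n$ be binary codes and let $\mathcal{C}=\{\Psi(\mathbf{a},\mathbf{b}):\mathbf{a}\in\mathcal{C}_1,\mathbf{b}\in\mathcal{C}_2\}$. Then: (1) if $\mathcal{C}_1$ is balanced, then $\mathcal{C}$ is balanced; (2) if $\mathcal{C}_1$ or $\mathcal{C}_2$ is a $\kappa$-WMU code, then $\mathcal{C}$ is a $\kappa$-WMU code; (3) if $d_1,d_2$ are the minimum Hamming distances of $\mathcal{C}_1,\mathcal{C}_2$, then the minimum Hamming distance of $\mathcal{C}$ is at least $\min(d_1,d_2)$; (4) if $\mathcal{C}_2$ is an $f$-APD code, then $\mathcal{C}$ is an $f$-APD code.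
   Context: $\mathbb{F}_2=\{0,1\}$ and $\mathbb{F}_4$ is identified with the DNA alphabet $\{\mathtt{A},\mathtt{T},\mathtt{C},\mathtt{G}\}$. For $\mathbf{a}=(a_1,\dots,a_n)$ write $\mathbf{a}_i^j=(a_i,\dots,a_j)$ if $i\le j$ and $\mathbf{a}_i^j=(a_i,a_{i-1},\dots,a_j)$ if $i>j$. Complement $\bar{\mathbf{a}}$: for binary sequences flip every bit; for DNA sequences apply $\mathtt{A}\leftrightarrow\mathtt{T}$, $\mathtt{C}\leftrightarrow\mathtt{G}$ coordinatewise. A binary sequence of length $n$ is balanced if exactly $n/2$ of its entries are $1$; a DNA sequence of length $n$ is balanced if exactly $n/2$ of its entries lie in $\{\mathtt{G},\mathtt{C}\}$; a code is balanced if all its codewords are. A code $\mathcal{C}\subseteq\mathbb{F}_q^n$ is $\kappa$-WMU ($1\le\kappa<n$) if for all not necessarily distinct $\mathbf{a},\mathbf{b}\in\mathcal{C}$ and all $\kappa\le l<n$, $\mathbf{a}_1^l\ne\mathbf{b}_{n-l+1}^n$. A code $\mathcal{C}\subseteq\mathbb{F}_q^n$ ($q\in\{2,4\}$) is $f$-APD (avoids primer dimers of effective length $f$) if for all not necessarily distinct $\mathbf{a},\mathbf{b}\in\mathcal{C}$ and all $1\le i,j\le n+1-f$ one has $\bar{\mathbf{a}}_i^{f+i-1}\ne\mathbf{b}_j^{f+j-1}$ and $\bar{\mathbf{a}}_i^{f+i-1}\ne\mathbf{b}_{f+j-1}^{j}$. *)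

theory Defs
  imports Main "HOL-Library.Extended_Nat"
begin

text \<open>Binary alphabet F_2 = {0,1} is represented by bool (False = 0, True = 1).
  Sequences of length n are lists of length n, indexed 1..n as in the paper.\<close>

datatype dna = A | T | C | G

text \<open>Subsequence notation a_i^j (1-based): increasing if i <= j, decreasing otherwise.\<close>
definition sub :: "'a list \<Rightarrow> nat \<Rightarrow> nat \<Rightarrow> 'a list" where
  "sub x i j = (if i \<le> j then map (\<lambda>k. x ! (k - 1)) [i..<Suc j]
                else map (\<lambda>k. x ! (k - 1)) (rev [j..<Suc i]))"

definition bin_comp :: "bool list \<Rightarrow> bool list" where
  "bin_comp a = map Not a"

fun dna_comp1 :: "dna \<Rightarrow> dna" where
  "dna_comp1 A = T" | "dna_comp1 T = A" | "dna_comp1 C = G" | "dna_comp1 G = C"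

definition dna_comp :: "dna list \<Rightarrow> dna list" where
  "dna_comp a = map dna_comp1 a"

fun psi1 :: "bool \<Rightarrow> bool \<Rightarrow> dna" where
  "psi1 False False = A" | "psi1 False True = T" | "psi1 True False = C" | "psi1 True True = G"

definition psi :: "bool list \<Rightarrow> bool list \<Rightarrow> dna list" where
  "psi a b = map2 psi1 a b"

definition balanced_bin_code :: "bool list set \<Rightarrow> bool" where
  "balanced_bin_code Cd = (\<forall>a\<in>Cd. 2 * length (filter (\<lambda>x. x) a) = length a)"

definition balanced_dna_code :: "dna list set \<Rightarrow> bool" where
  "balanced_dna_code Cd = (\<forall>a\<in>Cd. 2 * length (filter (\<lambda>x. x = G \<or> x = C) a) = length a)"

definition wmu :: "nat \<Rightarrow> nat \<Rightarrow> 'a list set \<Rightarrow> bool" where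
  "wmu n \<kappa> Cd = (1 \<le> \<kappa> \<and> \<kappa> < n \<and>
     (\<forall>a\<in>Cd. \<forall>b\<in>Cd. \<forall>l. \<kappa> \<le> l \<and> l < n \<longrightarrow> sub a 1 l \<noteq> sub b (n - l + 1) n))"

definition apd :: "('a list \<Rightarrow> 'a list) \<Rightarrow> nat \<Rightarrow> nat \<Rightarrow> 'a list set \<Rightarrow> bool" where
  "apd cmp n f Cd = (\<forall>a\<in>Cd. \<forall>b\<in>Cd. \<forall>i j. 1 \<le> i \<and> i \<le> n + 1 - f \<and> 1 \<le> j \<and> j \<le> n + 1 - f \<longrightarrow>
       sub (cmp a) i (f + i - 1) \<noteq> sub b j (f + j - 1) \<and>
       sub (cmp a) i (f + i - 1) \<noteq> sub b (f + j - 1) j)"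

definition hamming :: "'a list \<Rightarrow> 'a list \<Rightarrow> nat" where
  "hamming a b = card {i. i < length a \<and> a ! i \<noteq> b ! i}"

text \<open>Minimum Hamming distance; by convention infinity if the code has fewer than two words.\<close>
definition min_dist :: "'a list set \<Rightarrow> enat" where
  "min_dist Cd = (INF p \<in> {(a, b). a \<in> Cd \<and> b \<in> Cd \<and> a \<noteq> b}. enat (hamming (fst p) (snd p)))"

end

theory Submission
  imports Defs
begin

fun hi :: "dna \<Rightarrow> bool" where
  "hi A = False" | "hi T = False" | "hi C = True" | "hi G = True"
fun lo :: "dna \<Rightarrow> bool" where
  "lo A = False" | "lo T = True" | "lo C = False" | "lo G = True"

lemma hi_psi1[simp]: "hi (psi1 x y) = x" by (cases x; cases y) auto
lemma lo_psi1[simp]: "lo (psi1 x y) = y" by (cases x; cases y) auto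
lemma lo_comp[simp]: "lo (dna_comp1 d) = (\<not> lo d)" by (cases d) auto

lemma map_hi_psi: "length a = length b \<Longrightarrow> map hi (psi a b) = a"
proof (induction a arbitrary: b)
  case (Cons x a)
  then show ?case by (cases b) (auto simp: psi_def)
qed (simp add: psi_def)
lemma map_lo_psi: "length a = length b \<Longrightarrow> map lo (psi a b) = b"
proof (induction a arbitrary: b)
  case (Cons x a)
  then show ?case by (cases b) (auto simp: psi_def)
qed (simp add: psi_def)

lemma sub_map: "1 \<le> i \<Longrightarrow> 1 \<le> j \<Longrightarrow> i \<le> length x \<Longrightarrow> j \<le> length x \<Longrightarrow>
  map g (sub x i j) = sub (map g x) i j"
  unfolding sub_def by (auto intro!: map_cong)

lemma map_lo_comp: "map lo (dna_comp x) = bin_comp (map lo x)"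
  unfolding dna_comp_def bin_comp_def by simp

lemma psi1_inj: "psi1 x y = psi1 x' y' \<Longrightarrow> x = x' \<and> y = y'"
  by (metis hi_psi1 lo_psi1)

lemma nth_psi: "i < length a \<Longrightarrow> i < length b \<Longrightarrow> psi a b ! i = psi1 (a!i) (b!i)"
  unfolding psi_def by simp

lemma len_psi[simp]: "length (psi a b) = min (length a) (length b)"
  unfolding psi_def by simp

lemma ham_hi: assumes "length a = n" "length b = n" "length a' = n" "length b' = n"
  shows "hamming a a' \<le> hamming (psi a b) (psi a' b')"
        "hamming b b' \<le> hamming (psi a b) (psi a' b')"
proof -
  have "{i. i < length a \<and> a ! i \<noteq> a' ! i} \<subseteq> {i. i < length (psi a b) \<and> psi a b ! i \<noteq> psi a' b' ! i}"
    using assms by (auto simp: nth_psi dest: psi1_inj)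
  then show "hamming a a' \<le> hamming (psi a b) (psi a' b')"
    unfolding hamming_def by (intro card_mono) auto
  have "{i. i < length b \<and> b ! i \<noteq> b' ! i} \<subseteq> {i. i < length (psi a b) \<and> psi a b ! i \<noteq> psi a' b' ! i}"
    using assms by (auto simp: nth_psi dest: psi1_inj)
  then show "hamming b b' \<le> hamming (psi a b) (psi a' b')"
    unfolding hamming_def using assms by (intro card_mono) auto
qed

lemma bal_psi: "length a = length b \<Longrightarrow>
  length (filter (\<lambda>x. x = G \<or> x = C) (psi a b)) = length (filter (\<lambda>x. x) a)"
proof (induction a arbitrary: b)
  case Nil then show ?case by (simp add: psi_def)
next
  case (Cons x a)
  then obtain y b' where "b = y # b'" by (cases b) auto
  with Cons show ?case by (cases x; cases y) (auto simp: psi_def)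
qed

theorem lemma2:
  fixes n :: nat and C1 C2 :: "bool list set" and Cd :: "dna list set"
  assumes "\<forall>a\<in>C1. length a = n"
    and "\<forall>b\<in>C2. length b = n"
    and "Cd = {psi a b | a b. a \<in> C1 \<and> b \<in> C2}"
  shows "(balanced_bin_code C1 \<longrightarrow> balanced_dna_code Cd)
       \<and> (\<forall>\<kappa>. wmu n \<kappa> C1 \<or> wmu n \<kappa> C2 \<longrightarrow> wmu n \<kappa> Cd)
       \<and> min (min_dist C1) (min_dist C2) \<le> min_dist Cd
       \<and> (\<forall>f. 1 \<le> f \<longrightarrow> apd bin_comp n f C2 \<longrightarrow> apd dna_comp n f Cd)"
proof (intro conjI allI impI)
  assume "balanced_bin_code C1"
  then show "balanced_dna_code Cd"
    using assms unfolding balanced_bin_code_def balanced_dna_code_def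
    by (auto simp: bal_psi)
next
  fix \<kappa> assume h: "wmu n \<kappa> C1 \<or> wmu n \<kappa> C2"
  show "wmu n \<kappa> Cd"
    unfolding wmu_def
  proof (intro conjI ballI allI impI)
    show "1 \<le> \<kappa>" "\<kappa> < n" using h unfolding wmu_def by auto
  next
    fix c c' l assume c: "c \<in> Cd" "c' \<in> Cd" and l: "\<kappa> \<le> l \<and> l < n"
    from c assms obtain a b a' b' where ab: "c = psi a b" "c' = psi a' b'"
      "a \<in> C1" "b \<in> C2" "a' \<in> C1" "b' \<in> C2" by auto
    have len: "length a = n" "length b = n" "length a' = n" "length b' = n"
      using ab assms by auto
    have k1: "1 \<le> \<kappa>" using h unfolding wmu_def by auto
    have nl: "n - l + 1 \<le> n" "1 \<le> l" using k1 l by auto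
    show "sub c 1 l \<noteq> sub c' (n - l + 1) n"
    proof
      assume eq: "sub c 1 l = sub c' (n - l + 1) n"
      have "map hi (sub c 1 l) = map hi (sub c' (n - l + 1) n)" using eq by simp
      then have e1: "sub a 1 l = sub a' (n - l + 1) n"
        using len l k1 nl ab sub_map[of 1 l "psi a b" hi] sub_map[of "n - l + 1" n "psi a' b'" hi]
        by (simp add: map_hi_psi)
      have "map lo (sub c 1 l) = map lo (sub c' (n - l + 1) n)" using eq by simp
      then have e2: "sub b 1 l = sub b' (n - l + 1) n"
        using len l k1 nl ab sub_map[of 1 l "psi a b" lo] sub_map[of "n - l + 1" n "psi a' b'" lo]
        by (simp add: map_lo_psi)
      from h show False
        using e1 e2 ab l unfolding wmu_def by blast
    qed
  qed
next
  show "min (min_dist C1) (min_dist C2) \<le> min_dist Cd"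
    unfolding min_dist_def
  proof (rule INF_greatest, clarsimp)
    fix c c' assume c: "c \<in> Cd" "c' \<in> Cd" "c \<noteq> c'"
    from c assms obtain a b a' b' where ab: "c = psi a b" "c' = psi a' b'"
      "a \<in> C1" "b \<in> C2" "a' \<in> C1" "b' \<in> C2" by auto
    have len: "length a = n" "length b = n" "length a' = n" "length b' = n"
      using ab assms by auto
    have "a \<noteq> a' \<or> b \<noteq> b'" using c ab by auto
    then show "min (INF p\<in>{(a, b). a \<in> C1 \<and> b \<in> C1 \<and> a \<noteq> b}. enat (hamming (fst p) (snd p)))
        (INF p\<in>{(a, b). a \<in> C2 \<and> b \<in> C2 \<and> a \<noteq> b}. enat (hamming (fst p) (snd p)))
       \<le> enat (hamming c c')"
    proof
      assume "a \<noteq> a'"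
      then have "(INF p\<in>{(a, b). a \<in> C1 \<and> b \<in> C1 \<and> a \<noteq> b}. enat (hamming (fst p) (snd p)))
          \<le> enat (hamming a a')" using ab by (intro INF_lower2[of "(a,a')"]) auto
      also have "\<dots> \<le> enat (hamming c c')" using ham_hi(1)[OF len] ab by simp
      finally show ?thesis by (rule min.coboundedI1)
    next
      assume "b \<noteq> b'"
      then have "(INF p\<in>{(a, b). a \<in> C2 \<and> b \<in> C2 \<and> a \<noteq> b}. enat (hamming (fst p) (snd p)))
          \<le> enat (hamming b b')" using ab by (intro INF_lower2[of "(b,b')"]) auto
      also have "\<dots> \<le> enat (hamming c c')" using ham_hi(2)[OF len] ab by simp
      finally show ?thesis by (rule min.coboundedI2)
    qed
  qed
next
  fix f :: nat assume f1: "1 \<le> f" and ap: "apd bin_comp n f C2"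
  show "apd dna_comp n f Cd"
    unfolding apd_def
  proof (intro ballI allI impI)
    fix c c' i j assume c: "c \<in> Cd" "c' \<in> Cd"
      and ij: "1 \<le> i \<and> i \<le> n + 1 - f \<and> 1 \<le> j \<and> j \<le> n + 1 - f"
    from c assms obtain a b a' b' where ab: "c = psi a b" "c' = psi a' b'"
      "a \<in> C1" "b \<in> C2" "a' \<in> C1" "b' \<in> C2" by auto
    have len: "length a = n" "length b = n" "length a' = n" "length b' = n"
      using ab assms by auto
    have lc: "length (dna_comp c) = n" "length c' = n" using len ab by (auto simp: dna_comp_def)
    have mc: "map lo (dna_comp c) = bin_comp b" using len ab by (simp add: map_lo_comp map_lo_psi)
    have mc': "map lo c' = b'" using len ab by (simp add: map_lo_psi)
    have bd: "f + i - 1 \<le> n" "f + j - 1 \<le> n" "1 \<le> f + i - 1" "1 \<le> f + j - 1" "i \<le> n" "j \<le> n"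
      using ij f1 by auto
    have A: "sub (bin_comp b) i (f + i - 1) \<noteq> sub b' j (f + j - 1) \<and>
       sub (bin_comp b) i (f + i - 1) \<noteq> sub b' (f + j - 1) j"
      using ap ab ij unfolding apd_def by blast
    show "sub (dna_comp c) i (f + i - 1) \<noteq> sub c' j (f + j - 1) \<and>
       sub (dna_comp c) i (f + i - 1) \<noteq> sub c' (f + j - 1) j"
    proof (intro conjI notI)
      assume "sub (dna_comp c) i (f + i - 1) = sub c' j (f + j - 1)"
      then have "map lo (sub (dna_comp c) i (f + i - 1)) = map lo (sub c' j (f + j - 1))" by simp
      then show False using A bd ij lc by (simp add: sub_map mc mc')
    next
      assume "sub (dna_comp c) i (f + i - 1) = sub c' (f + j - 1) j"
      then have "map lo (sub (dna_comp c) i (f + i - 1)) = map lo (sub c' (f + j - 1) j)" by simp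
      then show False using A bd ij lc by (simp add: sub_map mc mc')
    qed
  qed
qed

end
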